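(* For $n\ge1$, any Sherali–Adams refutation of the binary $\mathrm{PHP}^{n+1}_n$ has to contain at least $\left(\frac65\right)^{n/16}-1$ terms.
   Context: Binary Pigeonhole Principle $\mathrm{PHP}^{m}_n$: pigeons $[m]$, holes $[n]$, $r=\lceil\log_2 n\rceil$, each hole $a$ given a distinct $r$-bit representation $a_1\dots a_r$. Variables $P_{i,j}$ ($i\in[m]$, $j\in[r]$); $X^1=X$, $X^0=\neg X$. Clauses: for every hole $a$ and pigeons $i\ne i'$, $\bigvee_{j}P_{i,j}^{1-a_j}\vee\bigvee_j P_{i',j}^{1-a_j}$; and if $n$ is not a power of $2$, for each pigeon $i$ and each $r$-bit string $c$ representing no hole, $\bigvee_j P_{i,j}^{1-c_j}$. Sherali–Adams (SA): for every conjunction $D$ of literals (as a set; $\emptyset$ empty) there is a real variable (term) $Z_D$, $Z_\emptyset=1$. Lifts by $D$: of a clause $l_1\vee\dots\vee l_t$, $Z_{l_1\wedge D}+\dots+Z_{l_t\wedge D}\ge Z_D$; of negation equalities, $Z_{v\wedge D}+Z_{\neg v\wedge D}=Z_D$; of bounds, $0\le Z_{l\wedge D}\le Z_D$. An SA refutation is a set of such lifted constraints (by conjunctions of any size) with empty common real solution set; the terms it contains are the variables $Z_D$ occurring in its constraints. *)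

theory Defs
  imports Complex_Main
begin

text \<open>Variables P_{i,j} are pairs (i,j) with i < m (pigeon), j < r (bit).
  A literal is a pair (v, b): (v, True) is v, (v, False) is the negation of v
  (so X^b = (X, b)).  A conjunction of literals is a set of literals.\<close>

type_synonym var = "nat \<times> nat"
type_synonym lit = "var \<times> bool"

definition php_vars :: "nat \<Rightarrow> nat \<Rightarrow> var set" where
  "php_vars m r = {(i, j). i < m \<and> j < r}"

definition php_lits :: "nat \<Rightarrow> nat \<Rightarrow> lit set" where
  "php_lits m r = php_vars m r \<times> UNIV"

text \<open>Hole a (a < n) is represented by the bit string enc a 0, ..., enc a (r-1).  The second family is empty
  when every r-bit string represents a hole (i.e. when n is a power of 2).\<close>

definition bphp_clauses :: "nat \<Rightarrow> nat \<Rightarrow> nat \<Rightarrow> (nat \<Rightarrow> nat \<Rightarrow> bool) \<Rightarrow> lit set set" where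
  "bphp_clauses m n r enc =
     {C. \<exists>a<n. \<exists>i<m. \<exists>i'<m. i \<noteq> i' \<and>
          C = {((i, j), \<not> enc a j) | j. j < r} \<union> {((i', j), \<not> enc a j) | j. j < r}}
   \<union> {C. \<exists>i<m. \<exists>c :: nat \<Rightarrow> bool. (\<forall>a<n. \<exists>j<r. c j \<noteq> enc a j) \<and>
          C = {((i, j), \<not> c j) | j. j < r}}"

text \<open>Lifted Sherali-Adams constraints:
  SA_Clause C D : lift of clause C by D;
  SA_Neg v D    : lift of the negation equality for v by D;
  SA_Bound l D  : lift of the bounds for literal l by D.\<close>

datatype sa_constraint =
    SA_Clause "lit set" "lit set"
  | SA_Neg var "lit set"
  | SA_Bound lit "lit set"

fun sa_valid :: "nat \<Rightarrow> nat \<Rightarrow> nat \<Rightarrow> (nat \<Rightarrow> nat \<Rightarrow> bool) \<Rightarrow> sa_constraint \<Rightarrow> bool" where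
  "sa_valid m n r enc (SA_Clause C D) \<longleftrightarrow> C \<in> bphp_clauses m n r enc \<and> D \<subseteq> php_lits m r"
| "sa_valid m n r enc (SA_Neg v D) \<longleftrightarrow> v \<in> php_vars m r \<and> D \<subseteq> php_lits m r"
| "sa_valid m n r enc (SA_Bound l D) \<longleftrightarrow> l \<in> php_lits m r \<and> D \<subseteq> php_lits m r"

fun sa_holds :: "(lit set \<Rightarrow> real) \<Rightarrow> sa_constraint \<Rightarrow> bool" where
  "sa_holds Z (SA_Clause C D) \<longleftrightarrow> (\<Sum>l\<in>C. Z (insert l D)) \<ge> Z D"
| "sa_holds Z (SA_Neg v D) \<longleftrightarrow> Z (insert (v, True) D) + Z (insert (v, False) D) = Z D"
| "sa_holds Z (SA_Bound l D) \<longleftrightarrow> 0 \<le> Z (insert l D) \<and> Z (insert l D) \<le> Z D"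

fun sa_terms :: "sa_constraint \<Rightarrow> lit set set" where
  "sa_terms (SA_Clause C D) = insert D ((\<lambda>l. insert l D) ` C)"
| "sa_terms (SA_Neg v D) = {insert (v, True) D, insert (v, False) D, D}"
| "sa_terms (SA_Bound l D) = {insert l D, D}"

definition sa_refutation ::
  "nat \<Rightarrow> nat \<Rightarrow> nat \<Rightarrow> (nat \<Rightarrow> nat \<Rightarrow> bool) \<Rightarrow> sa_constraint set \<Rightarrow> bool" where
  "sa_refutation m n r enc S \<longleftrightarrow>
     (\<forall>c\<in>S. sa_valid m n r enc c) \<and>
     \<not> (\<exists>Z :: lit set \<Rightarrow> real. Z {} = 1 \<and> (\<forall>c\<in>S. sa_holds Z c))"

definition sa_num_terms :: "sa_constraint set \<Rightarrow> nat" where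
  "sa_num_terms S = card (\<Union>c\<in>S. sa_terms c)"

end

theory Submission
  imports Defs "HOL-Library.FuncSet"
begin

locale sol =
  fixes n r :: nat and enc :: "nat \<Rightarrow> nat \<Rightarrow> bool" and K :: "nat set"
    and \<rho> :: "nat \<Rightarrow> nat" and F :: "nat set"
  assumes enc_inj: "\<forall>a<n. \<forall>b<n. a \<noteq> b \<longrightarrow> (\<exists>j<r. enc a j \<noteq> enc b j)"
    and K_sub: "K \<subseteq> {..<Suc n}" and F_sub: "F \<subseteq> {..<n}"
    and \<rho>_inj: "inj_on \<rho> K" and \<rho>_img: "\<rho> ` K = {..<n} - F"
    and r_pos: "r \<ge> 1"
begin

definition U where "U = {..<Suc n} - K"
definition tau :: "(nat \<Rightarrow> nat) \<Rightarrow> nat \<Rightarrow> nat" where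
  "tau \<sigma> i = (if i \<in> K then \<rho> i else \<sigma> i)"
definition lt :: "nat \<Rightarrow> (nat \<Rightarrow> nat) \<Rightarrow> lit \<Rightarrow> bool" where
  "lt u \<sigma> l = (if fst (fst l) = u then (\<forall>h\<in>F. enc h (snd (fst l)) = snd l)
                 else enc (tau \<sigma> (fst (fst l))) (snd (fst l)) = snd l)"
definition holds where "holds u \<sigma> E = (\<forall>l\<in>E. lt u \<sigma> l)"
definition Bs where "Bs u = {\<sigma>. \<sigma> \<in> extensional (U - {u}) \<and> bij_betw \<sigma> (U - {u}) F}"
definition Hs where "Hs u E = {\<sigma> \<in> Bs u. holds u \<sigma> E}"
definition P where "P u E = real (card (Hs u E)) / real (card (Bs u))"
definition eff where "eff E = {i \<in> U. \<exists>j b. ((i,j),b) \<in> E \<and> \<not>(\<forall>h\<in>F. enc h j = b)}"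
definition Z where
  "Z E = (if \<exists>u\<in>U. u \<notin> eff E then P (SOME u. u \<in> U \<and> u \<notin> eff E) E else 0)"

lemma finF: "finite F" using F_sub finite_subset by blast
lemma finU: "finite U" unfolding U_def by simp
lemma finK: "finite K" using K_sub finite_subset by blast

lemma card_K: "card K = n - card F"
proof -
  have "card K = card ({..<n} - F)" using \<rho>_inj \<rho>_img card_image by fastforce
  also have "\<dots> = n - card F" using F_sub finF by (simp add: card_Diff_subset)
  finally show ?thesis .
qed

lemma card_U: "card U = card F + 1"
proof -
  have "card F \<le> n" using F_sub finF by (metis card_lessThan card_mono finite_lessThan)
  moreover have "card U = Suc n - card K" unfolding U_def using K_sub finK
    by (simp add: card_Diff_subset)
  ultimately show ?thesis using card_K by simp
qed

lemma finite_Bs: "finite (Bs u)"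
proof -
  have "Bs u \<subseteq> (\<Pi>\<^sub>E i \<in> U - {u}. F)"
    unfolding Bs_def PiE_def Pi_def bij_betw_def by auto
  moreover have "finite (\<Pi>\<^sub>E i \<in> U - {u}. F)" using finU finF by (simp add: finite_PiE)
  ultimately show ?thesis using finite_subset by blast
qed

lemma Bs_ne: assumes "u \<in> U" shows "Bs u \<noteq> {}"
proof -
  have "card (U - {u}) = card F" using card_U assms finU by simp
  then obtain g where g: "bij_betw g (U - {u}) F"
    using finite_same_card_bij finU finF by blast
  have "restrict g (U - {u}) \<in> Bs u"
    unfolding Bs_def using g bij_betw_cong[of "U - {u}" g "restrict g (U - {u})" F] by auto
  then show ?thesis by blast
qed

lemma card_Bs_pos: "u \<in> U \<Longrightarrow> card (Bs u) > 0"
  using Bs_ne finite_Bs card_gt_0_iff by blast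

lemma U_K: "i \<in> U \<Longrightarrow> i \<notin> K" unfolding U_def by auto

lemma bij_move:
  assumes "bij_betw \<sigma> A B" "a \<in> A" "b \<notin> A"
  shows "bij_betw (\<sigma>(b := \<sigma> a)) (insert b (A - {a})) B"
proof -
  have eq: "\<And>x. x \<in> A - {a} \<Longrightarrow> (\<sigma>(b := \<sigma> a)) x = \<sigma> x" using assms(3) by auto
  have i1: "inj_on \<sigma> A" using assms(1) bij_betw_def by blast
  have "inj_on (\<sigma>(b := \<sigma> a)) (insert b (A - {a}))"
  proof (rule inj_onI)
    fix x y assume x: "x \<in> insert b (A - {a})" and y: "y \<in> insert b (A - {a})"
      and e: "(\<sigma>(b := \<sigma> a)) x = (\<sigma>(b := \<sigma> a)) y"
    show "x = y"
    proof (cases "x = b")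
      case True
      then show ?thesis
      proof (cases "y = b")
        case False
        then have "y \<in> A - {a}" using y by blast
        then have "\<sigma> a = \<sigma> y" using e True eq by simp
        then show ?thesis using i1 assms(2) \<open>y \<in> A - {a}\<close> inj_on_contraD by fastforce
      qed simp
    next
      case False
      then have xA: "x \<in> A - {a}" using x by blast
      show ?thesis
      proof (cases "y = b")
        case True
        then have "\<sigma> x = \<sigma> a" using e xA eq by simp
        then show ?thesis using i1 assms(2) xA inj_on_contraD by fastforce
      next
        case False
        then have "y \<in> A - {a}" using y by blast
        then show ?thesis using e xA eq i1 by (metis DiffD1 inj_on_contraD)
      qed
    qed
  qed
  moreover have "(\<sigma>(b := \<sigma> a)) ` (insert b (A - {a})) = B"
  proof -
    have "(\<sigma>(b := \<sigma> a)) ` (insert b (A - {a})) = insert (\<sigma> a) ((\<sigma>(b := \<sigma> a)) ` (A - {a}))"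
      by (simp only: image_insert fun_upd_same)
    also have "(\<sigma>(b := \<sigma> a)) ` (A - {a}) = \<sigma> ` (A - {a})" using eq by (rule image_cong[OF refl])
    also have "insert (\<sigma> a) (\<sigma> ` (A - {a})) = \<sigma> ` A" using assms(2) by (metis image_insert insert_Diff)
    finally show ?thesis using assms(1) by (simp add: bij_betw_def)
  qed
  ultimately show ?thesis unfolding bij_betw_def by blast
qed

lemma swap_le:
  assumes u: "u \<in> U" "u \<notin> eff E" and u': "u' \<in> U" "u' \<notin> eff E"
  shows "card (Hs u E) \<le> card (Hs u' E)"
proof (cases "u = u'")
  case True then show ?thesis by simp
next
  case False
  define \<phi> where "\<phi> \<sigma> = (\<sigma>(u := \<sigma> u'))(u' := undefined)" for \<sigma> :: "nat \<Rightarrow> nat"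
  have ef: "\<forall>h\<in>F. enc h j = b" if "((v,j),b) \<in> E" "v \<in> U" "v \<notin> eff E" for v j b
    using that unfolding eff_def by blast
  have "inj_on \<phi> (Hs u E)"
  proof (rule inj_onI)
    fix \<sigma>1 \<sigma>2 assume a: "\<sigma>1 \<in> Hs u E" "\<sigma>2 \<in> Hs u E" "\<phi> \<sigma>1 = \<phi> \<sigma>2"
    have e1: "\<sigma>1 u = undefined" "\<sigma>2 u = undefined"
      using a(1,2) unfolding Hs_def Bs_def extensional_def by auto
    show "\<sigma>1 = \<sigma>2"
    proof
      fix x
      show "\<sigma>1 x = \<sigma>2 x"
      proof -
        have "\<phi> \<sigma>1 x = \<phi> \<sigma>2 x" "\<phi> \<sigma>1 u = \<phi> \<sigma>2 u" using a(3) by auto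
        then show ?thesis using e1 False unfolding \<phi>_def
          by (cases "x = u"; cases "x = u'") auto
      qed
    qed
  qed
  moreover have "\<phi> ` Hs u E \<subseteq> Hs u' E"
  proof
    fix \<tau> assume "\<tau> \<in> \<phi> ` Hs u E"
    then obtain \<sigma> where s: "\<sigma> \<in> Hs u E" and t: "\<tau> = \<phi> \<sigma>" by blast
    have sb: "bij_betw \<sigma> (U - {u}) F" "\<sigma> \<in> extensional (U - {u})"
      using s unfolding Hs_def Bs_def by auto
    have "bij_betw (\<sigma>(u := \<sigma> u')) (insert u (U - {u} - {u'})) F"
      using bij_move[OF sb(1), of u' u] u' False by auto
    moreover have "insert u (U - {u} - {u'}) = U - {u'}" using u False by auto
    ultimately have b1: "bij_betw (\<sigma>(u := \<sigma> u')) (U - {u'}) F" by simp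
    have b2: "bij_betw \<tau> (U - {u'}) F"
      using b1 unfolding t \<phi>_def by (rule bij_betw_cong[THEN iffD1, rotated]) auto
    have ex: "\<tau> \<in> extensional (U - {u'})"
      using sb(2) u unfolding t \<phi>_def extensional_def by auto
    have su': "\<sigma> u' \<in> F" using sb(1) u' False unfolding bij_betw_def by auto
    have ho: "holds u' \<tau> E"
      unfolding holds_def
    proof
      fix l assume l: "l \<in> E"
      obtain v j b where lv: "l = ((v,j),b)" by (metis prod.collapse)
      show "lt u' \<tau> l"
      proof (cases "v = u'")
        case True then show ?thesis using ef[of u' j b] l lv u' unfolding lt_def by auto
      next
        case vu': False
        show ?thesis
        proof (cases "v = u")
          case True
          have "tau \<tau> v = \<sigma> u'" using True U_K[OF u(1)] False unfolding tau_def t \<phi>_def by auto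
          then show ?thesis using ef[of u j b] l lv u True su' vu' unfolding lt_def by auto
        next
          case False
          have "tau \<tau> v = tau \<sigma> v" using False vu' unfolding tau_def t \<phi>_def by auto
          moreover have "lt u \<sigma> l" using s l unfolding Hs_def holds_def by auto
          ultimately show ?thesis using False vu' lv unfolding lt_def by auto
        qed
      qed
    qed
    show "\<tau> \<in> Hs u' E" unfolding Hs_def Bs_def using b2 ex ho by auto
  qed
  moreover have "finite (Hs u' E)" using finite_Bs unfolding Hs_def by auto
  ultimately show ?thesis using card_inj_on_le by blast
qed

lemma Hs_empty: "Hs v {} = Bs v" unfolding Hs_def holds_def by auto

lemma eff_empty: "eff {} = {}" unfolding eff_def by auto

lemma swap_eq:
  assumes "u \<in> U" "u \<notin> eff E" "u' \<in> U" "u' \<notin> eff E"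
  shows "P u E = P u' E"
proof -
  have "card (Hs u E) = card (Hs u' E)" using swap_le assms by (simp add: le_antisym)
  moreover have "card (Hs u {}) = card (Hs u' {})"
    using swap_le[of u "{}" u'] swap_le[of u' "{}" u] assms unfolding eff_empty by simp
  ultimately show ?thesis unfolding P_def Hs_empty by simp
qed

lemma Z_eq: assumes "u \<in> U" "u \<notin> eff E" shows "Z E = P u E"
proof -
  have ex: "\<exists>u. u \<in> U \<and> u \<notin> eff E" using assms by blast
  have s: "(SOME u. u \<in> U \<and> u \<notin> eff E) \<in> U \<and> (SOME u. u \<in> U \<and> u \<notin> eff E) \<notin> eff E"
    using someI_ex[OF ex] .
  have "Z E = P (SOME u. u \<in> U \<and> u \<notin> eff E) E" unfolding Z_def using assms by auto
  also have "\<dots> = P u E" using swap_eq[of "SOME u. u \<in> U \<and> u \<notin> eff E" E u] s assms by blast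
  finally show ?thesis .
qed

lemma U_ne: "U \<noteq> {}" using card_U by auto

lemma Z_empty: "Z {} = 1"
proof -
  obtain u where u: "u \<in> U" using U_ne by blast
  have "Z {} = P u {}" using Z_eq[OF u] eff_empty by simp
  also have "\<dots> = 1" unfolding P_def Hs_empty using card_Bs_pos[OF u] by simp
  finally show ?thesis .
qed

lemma eff_insert: "eff (insert l D) \<subseteq> insert (fst (fst l)) (eff D)"
  unfolding eff_def by auto

lemma pick_u: assumes "finite X" "card X \<le> card F" shows "\<exists>u\<in>U. u \<notin> X"
proof (rule ccontr)
  assume "\<not> ?thesis"
  then have "U \<subseteq> X" by blast
  then have "card U \<le> card X" using assms(1) card_mono by blast
  then show False using assms(2) card_U by simp
qed

lemma fin_eff: "finite (eff E)" unfolding eff_def using finU by auto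

lemma tau_lt: assumes "\<sigma> \<in> Bs u" "i < Suc n" "i \<noteq> u" shows "tau \<sigma> i < n"
proof (cases "i \<in> K")
  case True then have "\<rho> i \<in> {..<n} - F" using \<rho>_img by blast
  then show ?thesis using True unfolding tau_def by simp
next
  case False then have "i \<in> U - {u}" using assms unfolding U_def by auto
  then have "\<sigma> i \<in> F" using assms(1) unfolding Bs_def bij_betw_def by auto
  then show ?thesis using False F_sub unfolding tau_def by auto
qed

lemma tau_inj: assumes "\<sigma> \<in> Bs u" "i < Suc n" "i \<noteq> u" "i' < Suc n" "i' \<noteq> u" "i \<noteq> i'"
  shows "tau \<sigma> i \<noteq> tau \<sigma> i'"
proof -
  have b: "bij_betw \<sigma> (U - {u}) F" using assms(1) unfolding Bs_def by auto
  show ?thesis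
  proof (cases "i \<in> K")
    case iK: True
    show ?thesis
    proof (cases "i' \<in> K")
      case True then show ?thesis using iK \<rho>_inj assms(6) unfolding tau_def inj_on_def by auto
    next
      case False then have "i' \<in> U - {u}" using assms unfolding U_def by auto
      then have "\<sigma> i' \<in> F" using b unfolding bij_betw_def by auto
      moreover have "\<rho> i \<notin> F" using iK \<rho>_img by blast
      ultimately show ?thesis using iK False unfolding tau_def by auto
    qed
  next
    case iK: False
    then have iU: "i \<in> U - {u}" using assms unfolding U_def by auto
    then have si: "\<sigma> i \<in> F" using b unfolding bij_betw_def by auto
    show ?thesis
    proof (cases "i' \<in> K")
      case True
      moreover have "\<rho> i' \<notin> F" using True \<rho>_img by blast
      ultimately show ?thesis using iK si unfolding tau_def by auto
    next
      case False then have "i' \<in> U - {u}" using assms unfolding U_def by auto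
      then show ?thesis using iU iK False b assms(6) unfolding tau_def bij_betw_def inj_on_def by auto
    qed
  qed
qed

definition dead where
  "dead D = (\<exists>l\<in>D. fst (fst l) \<in> K \<and> enc (\<rho> (fst (fst l))) (snd (fst l)) \<noteq> snd l)"

lemma dead_insert: "dead D \<Longrightarrow> dead (insert l D)" unfolding dead_def by auto

lemma dead_Hs: assumes "dead D" "u \<in> U" shows "Hs u D = {}"
proof -
  obtain l where l: "l \<in> D" "fst (fst l) \<in> K" "enc (\<rho> (fst (fst l))) (snd (fst l)) \<noteq> snd l"
    using assms(1) unfolding dead_def by blast
  have "fst (fst l) \<noteq> u" using l(2) assms(2) U_K by blast
  then have "\<not> lt u \<sigma> l" for \<sigma> using l unfolding lt_def tau_def by auto
  then show ?thesis using l(1) unfolding Hs_def holds_def by auto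
qed

lemma dead_Z: assumes "dead D" shows "Z D = 0"
proof (cases "\<exists>u\<in>U. u \<notin> eff D")
  case True
  then obtain u where u: "u \<in> U" "u \<notin> eff D" by blast
  show ?thesis using Z_eq[OF u] dead_Hs[OF assms u(1)] unfolding P_def by simp
next
  case False then show ?thesis unfolding Z_def by auto
qed

lemma Hs_insert: "Hs u (insert l D) = {\<sigma> \<in> Hs u D. lt u \<sigma> l}"
  unfolding Hs_def holds_def by auto

lemma fin_Hs: "finite (Hs u D)" unfolding Hs_def using finite_Bs by auto

lemma clause_sat:
  assumes C: "C \<in> bphp_clauses (Suc n) n r enc" and \<sigma>: "\<sigma> \<in> Bs u"
    and nu: "\<forall>l\<in>C. fst (fst l) \<noteq> u"
  shows "\<exists>l\<in>C. lt u \<sigma> l"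
  using C unfolding bphp_clauses_def
proof (elim UnE CollectE exE conjE)
  fix a i i'
  assume a: "a < n" and i: "i < Suc n" and i': "i' < Suc n" and ii: "i \<noteq> i'"
    and Ceq: "C = {((i, j), \<not> enc a j) |j. j < r} \<union> {((i', j), \<not> enc a j) |j. j < r}"
  have "((i,0), \<not> enc a 0) \<in> C" "((i',0), \<not> enc a 0) \<in> C" using Ceq r_pos by auto
  then have iu: "i \<noteq> u" "i' \<noteq> u" using nu by fastforce+
  have "tau \<sigma> i \<noteq> tau \<sigma> i'" using tau_inj[OF \<sigma> i iu(1) i' iu(2) ii] .
  then consider "tau \<sigma> i \<noteq> a" | "tau \<sigma> i' \<noteq> a" by fastforce
  then show ?thesis
  proof cases
    case 1
    obtain j where j: "j < r" "enc (tau \<sigma> i) j \<noteq> enc a j"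
      using enc_inj tau_lt[OF \<sigma> i iu(1)] a 1 by blast
    have "((i,j), \<not> enc a j) \<in> C" using Ceq j by auto
    moreover have "lt u \<sigma> ((i,j), \<not> enc a j)" using j iu unfolding lt_def by auto
    ultimately show ?thesis by blast
  next
    case 2
    obtain j where j: "j < r" "enc (tau \<sigma> i') j \<noteq> enc a j"
      using enc_inj tau_lt[OF \<sigma> i' iu(2)] a 2 by blast
    have "((i',j), \<not> enc a j) \<in> C" using Ceq j by auto
    moreover have "lt u \<sigma> ((i',j), \<not> enc a j)" using j iu unfolding lt_def by auto
    ultimately show ?thesis by blast
  qed
next
  fix i c
  assume i: "i < Suc n" and c: "\<forall>a<n. \<exists>j<r. c j \<noteq> enc a j"
    and Ceq: "C = {((i, j), \<not> c j) |j. j < r}"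
  have "((i,0), \<not> c 0) \<in> C" using Ceq r_pos by auto
  then have iu: "i \<noteq> u" using nu by fastforce
  obtain j where j: "j < r" "c j \<noteq> enc (tau \<sigma> i) j" using c tau_lt[OF \<sigma> i iu] by blast
  have "((i,j), \<not> c j) \<in> C" using Ceq j by auto
  moreover have "lt u \<sigma> ((i,j), \<not> c j)" using j iu unfolding lt_def by auto
  ultimately show ?thesis by blast
qed

lemma clause_pigs:
  assumes C: "C \<in> bphp_clauses (Suc n) n r enc"
  shows "finite C \<and> (\<exists>X. finite X \<and> card X \<le> 2 \<and> (\<forall>l\<in>C. fst (fst l) \<in> X))"
  using C unfolding bphp_clauses_def
proof (elim UnE CollectE exE conjE)
  fix a i i'
  assume Ceq: "C = {((i, j), \<not> enc a j) |j. j < r} \<union> {((i', j), \<not> enc a j) |j. j < r}"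
  have "finite C" unfolding Ceq by simp
  moreover have "card {i,i'} \<le> 2" by (simp add: card_insert_if)
  moreover have "\<forall>l\<in>C. fst (fst l) \<in> {i,i'}" unfolding Ceq by auto
  ultimately show ?thesis by (intro conjI exI[of _ "{i,i'}"]) auto
next
  fix i c
  assume Ceq: "C = {((i, j), \<not> c j) |j. j < r}"
  have "finite C" unfolding Ceq by simp
  moreover have "card {i} \<le> 2" by simp
  moreover have "\<forall>l\<in>C. fst (fst l) \<in> {i}" unfolding Ceq by auto
  ultimately show ?thesis by (intro conjI exI[of _ "{i}"]) auto
qed

lemma P_nonneg: "P u E \<ge> 0" unfolding P_def by simp

lemma P_mono: "P u (insert l D) \<le> P u D"
proof -
  have "card (Hs u (insert l D)) \<le> card (Hs u D)"
    using fin_Hs by (intro card_mono) (auto simp: Hs_insert)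
  then show ?thesis unfolding P_def by (simp add: divide_right_mono)
qed

lemma sol_one:
  assumes valid: "sa_valid (Suc n) n r enc c"
    and cond: "\<forall>E\<in>sa_terms c. dead E \<or> card (eff E) + 2 \<le> card F"
  shows "sa_holds Z c"
proof (cases c)
  case (SA_Clause C D)
  have CC: "C \<in> bphp_clauses (Suc n) n r enc" using valid SA_Clause by simp
  have Dc: "dead D \<or> card (eff D) + 2 \<le> card F" using cond SA_Clause by simp
  show ?thesis
  proof (cases "dead D")
    case True
    have "Z (insert l D) = 0" for l using dead_Z dead_insert True by blast
    then show ?thesis using SA_Clause dead_Z[OF True] by simp
  next
    case False
    then have cD: "card (eff D) + 2 \<le> card F" using Dc by blast
    obtain X where X: "finite X" "card X \<le> 2" "\<forall>l\<in>C. fst (fst l) \<in> X" and fC: "finite C"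
      using clause_pigs[OF CC] by blast
    have "card (eff D \<union> X) \<le> card F"
      using card_Un_le[of "eff D" X] X cD by linarith
    moreover have "finite (eff D \<union> X)" using fin_eff X(1) by simp
    ultimately obtain u where u: "u \<in> U" "u \<notin> eff D \<union> X" using pick_u by blast
    have Zl: "Z (insert l D) = P u (insert l D)" if "l \<in> C" for l
    proof -
      have "fst (fst l) \<in> X" using X(3) that by blast
      then have "u \<notin> eff (insert l D)" using eff_insert[of l D] u(2) by blast
      then show ?thesis using Z_eq[OF u(1)] by blast
    qed
    have ZD: "Z D = P u D" using Z_eq[OF u(1)] u(2) by blast
    have sub: "Hs u D \<subseteq> (\<Union>l\<in>C. Hs u (insert l D))"
    proof
      fix \<sigma> assume s: "\<sigma> \<in> Hs u D"
      have "\<sigma> \<in> Bs u" using s unfolding Hs_def by auto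
      moreover have "\<forall>l\<in>C. fst (fst l) \<noteq> u" using X(3) u(2) by blast
      ultimately obtain l where "l \<in> C" "lt u \<sigma> l" using clause_sat[OF CC] by blast
      then show "\<sigma> \<in> (\<Union>l\<in>C. Hs u (insert l D))" using s Hs_insert by blast
    qed
    have "card (Hs u D) \<le> card (\<Union>l\<in>C. Hs u (insert l D))"
      using sub fC fin_Hs by (intro card_mono) auto
    also have "\<dots> \<le> (\<Sum>l\<in>C. card (Hs u (insert l D)))" using fC card_UN_le by blast
    finally have le: "real (card (Hs u D)) \<le> (\<Sum>l\<in>C. real (card (Hs u (insert l D))))"
      by (metis of_nat_le_iff of_nat_sum)
    have "Z D = real (card (Hs u D)) / real (card (Bs u))" using ZD unfolding P_def by simp
    also have "\<dots> \<le> (\<Sum>l\<in>C. real (card (Hs u (insert l D)))) / real (card (Bs u))"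
      using le by (simp add: divide_right_mono)
    also have "\<dots> = (\<Sum>l\<in>C. P u (insert l D))" unfolding P_def by (simp add: sum_divide_distrib)
    also have "\<dots> = (\<Sum>l\<in>C. Z (insert l D))" using Zl by simp
    finally show ?thesis using SA_Clause by simp
  qed
next
  case (SA_Neg v D)
  have Dc: "dead D \<or> card (eff D) + 2 \<le> card F" using cond SA_Neg by simp
  show ?thesis
  proof (cases "dead D")
    case True
    have "Z (insert l D) = 0" for l using dead_Z dead_insert True by blast
    then show ?thesis using SA_Neg dead_Z[OF True] by simp
  next
    case False
    then have cD: "card (eff D) + 2 \<le> card F" using Dc by blast
    have cc: "card (eff D \<union> {fst v}) \<le> card F"
      using card_Un_le[of "eff D" "{fst v}"] cD by simp
    have ff: "finite (eff D \<union> {fst v})" using fin_eff by simp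
    obtain u where u: "u \<in> U" "u \<notin> eff D \<union> {fst v}" using pick_u[OF ff cc] by blast
    have Zl: "Z (insert (v,b) D) = P u (insert (v,b) D)" for b
    proof -
      have "eff (insert (v,b) D) \<subseteq> insert (fst v) (eff D)" using eff_insert[of "(v,b)" D] by simp
      then have "u \<notin> eff (insert (v,b) D)" using u(2) by blast
      then show ?thesis using Z_eq[OF u(1)] by blast
    qed
    have ZD: "Z D = P u D" using Z_eq[OF u(1)] u(2) by blast
    have lt2: "lt u \<sigma> (v,True) \<longleftrightarrow> \<not> lt u \<sigma> (v,False)" for \<sigma>
      using u(2) unfolding lt_def by auto
    have un: "Hs u (insert (v,True) D) \<union> Hs u (insert (v,False) D) = Hs u D"
      unfolding Hs_insert using lt2 by auto
    have di: "Hs u (insert (v,True) D) \<inter> Hs u (insert (v,False) D) = {}"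
      unfolding Hs_insert using lt2 by auto
    have "card (Hs u (insert (v,True) D)) + card (Hs u (insert (v,False) D)) = card (Hs u D)"
      using card_Un_disjoint[OF fin_Hs fin_Hs di] un by simp
    then have "P u (insert (v,True) D) + P u (insert (v,False) D) = P u D"
      unfolding P_def by (metis add_divide_distrib of_nat_add)
    then show ?thesis using SA_Neg Zl ZD by simp
  qed
next
  case (SA_Bound l D)
  have Dc: "dead D \<or> card (eff D) + 2 \<le> card F" using cond SA_Bound by simp
  show ?thesis
  proof (cases "dead D")
    case True
    have "Z (insert l D) = 0" using dead_Z dead_insert True by blast
    then show ?thesis using SA_Bound dead_Z[OF True] by simp
  next
    case False
    then have cD: "card (eff D) + 2 \<le> card F" using Dc by blast
    have cc: "card (eff D \<union> {fst (fst l)}) \<le> card F"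
      using card_Un_le[of "eff D" "{fst (fst l)}"] cD by simp
    have ff: "finite (eff D \<union> {fst (fst l)})" using fin_eff by simp
    obtain u where u: "u \<in> U" "u \<notin> eff D \<union> {fst (fst l)}" using pick_u[OF ff cc] by blast
    have Zl: "Z (insert l D) = P u (insert l D)"
    proof -
      have "u \<notin> eff (insert l D)" using eff_insert[of l D] u(2) by blast
      then show ?thesis using Z_eq[OF u(1)] by blast
    qed
    have ZD: "Z D = P u D" using Z_eq[OF u(1)] u(2) by blast
    show ?thesis using SA_Bound Zl ZD P_nonneg P_mono by simp
  qed
qed

lemma sol_exists:
  assumes valid: "\<forall>c\<in>S. sa_valid (Suc n) n r enc c"
    and cond: "\<forall>c\<in>S. \<forall>E\<in>sa_terms c. dead E \<or> card (eff E) + 2 \<le> card F"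
  shows "\<exists>Z :: lit set \<Rightarrow> real. Z {} = 1 \<and> (\<forall>c\<in>S. sa_holds Z c)"
  using Z_empty sol_one valid cond by blast

lemma sol_exists':
  assumes valid: "\<forall>c\<in>S. sa_valid (Suc n) n r enc c"
    and cond: "\<forall>c\<in>S. \<forall>E\<in>sa_terms c.
      (\<exists>l\<in>E. fst (fst l) \<in> K \<and> enc (\<rho> (fst (fst l))) (snd (fst l)) \<noteq> snd l) \<or>
      card {i \<in> {..<Suc n} - K. \<exists>j b. ((i,j),b) \<in> E \<and> \<not>(\<forall>h\<in>F. enc h j = b)} + 2 \<le> card F"
  shows "\<exists>Z :: lit set \<Rightarrow> real. Z {} = 1 \<and> (\<forall>c\<in>S. sa_holds Z c)"
proof (rule sol_exists[OF valid])
  show "\<forall>c\<in>S. \<forall>E\<in>sa_terms c. dead E \<or> card (eff E) + 2 \<le> card F"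
    using cond unfolding dead_def eff_def U_def by simp
qed

end

lemma two_bits:
  fixes enc :: "nat \<Rightarrow> nat \<Rightarrow> bool"
  assumes enc_inj: "\<forall>a<n. \<forall>b<n. a \<noteq> b \<longrightarrow> (\<exists>j<r. enc a j \<noteq> enc b j)"
    and b: "b1 < r" "b2 < r" "b1 \<noteq> b2"
  shows "card {a. a < n \<and> enc a b1 = x1 \<and> enc a b2 = x2} \<le> 2 ^ (r - 2)"
proof -
  define A where "A = {a. a < n \<and> enc a b1 = x1 \<and> enc a b2 = x2}"
  define J where "J = {..<r} - {b1, b2}"
  define \<phi> where "\<phi> a = restrict (enc a) J" for a
  have inj: "inj_on \<phi> A"
  proof (rule inj_onI)
    fix a a' assume a: "a \<in> A" "a' \<in> A" "\<phi> a = \<phi> a'"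
    have "\<forall>j<r. enc a j = enc a' j"
    proof (intro allI impI)
      fix j assume j: "j < r"
      show "enc a j = enc a' j"
      proof (cases "j \<in> J")
        case True
        then have "\<phi> a j = \<phi> a' j" using a(3) by simp
        then show ?thesis using True unfolding \<phi>_def by simp
      next
        case False
        then have "j = b1 \<or> j = b2" using j unfolding J_def by auto
        then show ?thesis using a(1,2) unfolding A_def by auto
      qed
    qed
    then show "a = a'" using enc_inj a(1,2) unfolding A_def by blast
  qed
  have img: "\<phi> ` A \<subseteq> (\<Pi>\<^sub>E j\<in>J. (UNIV :: bool set))" unfolding \<phi>_def by auto
  have fJ: "finite J" unfolding J_def by simp
  have cJ: "card J = r - 2" unfolding J_def using b by (simp add: card_Diff_subset)
  have "card A \<le> card (\<Pi>\<^sub>E j\<in>J. (UNIV :: bool set))"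
    using card_inj_on_le[OF inj img] fJ by (simp add: finite_PiE)
  also have "\<dots> = (\<Prod>j\<in>J. card (UNIV :: bool set))" by (rule card_PiE[OF fJ])
  also have "\<dots> = 2 ^ (r - 2)" using cJ by simp
  finally show ?thesis unfolding A_def .
qed

lemma balance:
  fixes enc :: "nat \<Rightarrow> nat \<Rightarrow> bool"
  assumes enc_inj: "\<forall>a<n. \<forall>b<n. a \<noteq> b \<longrightarrow> (\<exists>j<r. enc a j \<noteq> enc b j)"
    and rn: "2 ^ (r - 1) < n" and r2: "r \<ge> 2"
  shows "\<exists>F0. F0 \<subseteq> {..<n} \<and> 3 * n \<le> 4 * card F0 \<and>
     (\<forall>b<r. \<forall>x. (\<exists>h\<in>F0. enc h b = x) \<longrightarrow> n \<le> 4 * card {h\<in>F0. enc h b = x})"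
proof (cases "\<exists>b<r. \<exists>x. (\<exists>h<n. enc h b = x) \<and> 4 * card {h. h < n \<and> enc h b = x} < n")
  case False
  show ?thesis
  proof (intro exI conjI)
    show "{..<n} \<subseteq> {..<n}" by simp
    show "3 * n \<le> 4 * card {..<n}" by simp
    show "\<forall>b<r. \<forall>x. (\<exists>h\<in>{..<n}. enc h b = x) \<longrightarrow> n \<le> 4 * card {h \<in> {..<n}. enc h b = x}"
    proof (intro allI impI)
      fix b x assume b: "b < r" and ex: "\<exists>h\<in>{..<n}. enc h b = x"
      have "\<not> (4 * card {h. h < n \<and> enc h b = x} < n)" using False b ex by blast
      moreover have "{h \<in> {..<n}. enc h b = x} = {h. h < n \<and> enc h b = x}" by auto
      ultimately show "n \<le> 4 * card {h \<in> {..<n}. enc h b = x}" by simp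
    qed
  qed
next
  case True
  then obtain b x where b: "b < r" and small: "4 * card {h. h < n \<and> enc h b = x} < n" by blast
  define F0 where "F0 = {h. h < n \<and> enc h b \<noteq> x}"
  have split: "card F0 + card {h. h < n \<and> enc h b = x} = n"
  proof -
    have "{..<n} = F0 \<union> {h. h < n \<and> enc h b = x}" unfolding F0_def by auto
    moreover have "F0 \<inter> {h. h < n \<and> enc h b = x} = {}" unfolding F0_def by auto
    ultimately have "card {..<n} = card F0 + card {h. h < n \<and> enc h b = x}"
      by (metis card_Un_disjoint finite_Un finite_lessThan)
    then show ?thesis by simp
  qed
  have big: "3 * n < 4 * card F0" using split small by linarith
  have pw: "4 * 2 ^ (r - 2) < 2 * n"
  proof -
    have "(2::nat) ^ (r - 1) = 2 * 2 ^ (r - 2)" using r2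
      by (metis Suc_diff_Suc Suc_1 diff_Suc_1 less_le_trans lessI numeral_le_iff power_Suc semiring_norm(69) zero_less_numeral)
    then show ?thesis using rn by linarith
  qed
  show ?thesis
  proof (intro exI conjI)
    show "F0 \<subseteq> {..<n}" unfolding F0_def by auto
    show "3 * n \<le> 4 * card F0" using big by simp
    show "\<forall>b'<r. \<forall>x'. (\<exists>h\<in>F0. enc h b' = x') \<longrightarrow> n \<le> 4 * card {h \<in> F0. enc h b' = x'}"
    proof (intro allI impI)
      fix b' x' assume b': "b' < r" and ex: "\<exists>h\<in>F0. enc h b' = x'"
      show "n \<le> 4 * card {h \<in> F0. enc h b' = x'}"
      proof (cases "b' = b")
        case True
        then have "{h \<in> F0. enc h b' = x'} = F0" using ex unfolding F0_def by auto
        then show ?thesis using big by simp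
      next
        case False
        show ?thesis
        proof (rule ccontr)
          assume "\<not> ?thesis"
          then have sm: "4 * card {h \<in> F0. enc h b' = x'} < n" by simp
          have fin: "finite F0" unfolding F0_def by simp
          have "F0 = {h \<in> F0. enc h b' = x'} \<union> {h \<in> F0. enc h b' \<noteq> x'}" by auto
          moreover have "{h \<in> F0. enc h b' = x'} \<inter> {h \<in> F0. enc h b' \<noteq> x'} = {}" by auto
          ultimately have "card F0 = card {h \<in> F0. enc h b' = x'} + card {h \<in> F0. enc h b' \<noteq> x'}"
            using fin by (metis (no_types, lifting) card_Un_disjoint finite_Un)
          moreover have "{h \<in> F0. enc h b' \<noteq> x'} = {a. a < n \<and> enc a b = (\<not> x) \<and> enc a b' = (\<not> x')}"
            unfolding F0_def by auto
          then have "card {h \<in> F0. enc h b' \<noteq> x'} \<le> 2 ^ (r - 2)"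
            using two_bits[OF enc_inj b b' False[symmetric]] by simp
          ultimately show False using big sm pw by linarith
        qed
      qed
    qed
  qed
qed

lemma st_card:
  assumes "K \<subseteq> {..<Suc n}" "F \<subseteq> {..<n}" "inj_on \<rho> K" "\<rho> ` K = {..<n} - F"
  shows "card K + card F = n"
proof -
  have fF: "finite F" using assms(2) finite_subset by blast
  have "card K = card ({..<n} - F)" using assms(3,4) card_image by fastforce
  also have "\<dots> = n - card F" using assms(2) fF by (simp add: card_Diff_subset)
  finally show ?thesis using card_mono[OF _ assms(2)] by simp
qed

locale greedy =
  fixes n r :: nat and enc :: "nat \<Rightarrow> nat \<Rightarrow> bool" and T :: "lit set set"
    and F0 K0 :: "nat set" and \<rho>0 :: "nat \<Rightarrow> nat" and w s :: nat and p0 :: real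
  assumes T_fin: "finite T" and T_lits: "\<forall>E\<in>T. E \<subseteq> php_lits (Suc n) r"
    and K0_sub: "K0 \<subseteq> {..<Suc n}" and F0_sub: "F0 \<subseteq> {..<n}"
    and \<rho>0_inj: "inj_on \<rho>0 K0" and \<rho>0_img: "\<rho>0 ` K0 = {..<n} - F0"
    and bal: "\<forall>b<r. \<forall>x. (\<exists>h\<in>F0. enc h b = x) \<longrightarrow> n \<le> 4 * card {h\<in>F0. enc h b = x}"
    and sF: "s < card F0"
    and num: "\<forall>k<s. p0 * ((real (card F0) - k + 1) * (real (card F0) - k)) \<le> (real w - k) * (real n / 4 - k)"
    and nonneg: "\<forall>k<s. real k \<le> real w \<and> real k \<le> real n / 4"
    and p0: "0 \<le> p0" "p0 \<le> 1"
begin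

definition st where
  "st K \<rho> F \<longleftrightarrow> K \<subseteq> {..<Suc n} \<and> F \<subseteq> {..<n} \<and> inj_on \<rho> K \<and> \<rho> ` K = {..<n} - F"
definition U0 where "U0 = {..<Suc n} - K0"
definition eff0 where "eff0 E = {i \<in> U0. \<exists>j b. ((i,j),b) \<in> E \<and> \<not>(\<forall>h\<in>F0. enc h j = b)}"
definition killed where
  "killed K \<rho> E = (\<exists>l\<in>E. fst (fst l) \<in> K \<and> enc (\<rho> (fst (fst l))) (snd (fst l)) \<noteq> snd l)"
definition B where "B K \<rho> = {E \<in> T. w \<le> card (eff0 E) \<and> \<not> killed K \<rho> E}"
definition kill where "kill j h E = (\<exists>b x. ((j,b),x) \<in> E \<and> enc h b \<noteq> x)"

lemma finF0: "finite F0" using F0_sub finite_subset by blast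

lemma fin_B: "finite (B K \<rho>)" unfolding B_def using T_fin by simp

lemma fact1:
  assumes st: "st K \<rho> F" and K0K: "K0 \<subseteq> K" and FF0: "F \<subseteq> F0" and cF: "card F + k = card F0"
    and ks: "k < s" and E: "E \<in> B K \<rho>"
  shows "(real w - k) * (real n / 4 - k) \<le>
         real (card {p \<in> ({..<Suc n} - K) \<times> F. kill (fst p) (snd p) E})"
proof -
  define U where "U = {..<Suc n} - K"
  define V where "V = eff0 E \<inter> U"
  have stK: "K \<subseteq> {..<Suc n}" "F \<subseteq> {..<n}" "inj_on \<rho> K" "\<rho> ` K = {..<n} - F"
    using st unfolding st_def by auto
  have fK: "finite K" using stK(1) finite_subset by blast
  have fF: "finite F" using stK(2) finite_subset by blast
  have c1: "card K + card F = n" using st_card[OF stK] .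
  have c0: "card K0 + card F0 = n" using st_card[OF K0_sub F0_sub \<rho>0_inj \<rho>0_img] .
  have cKK0: "card (K - K0) = k"
    using c1 c0 cF K0K fK by (simp add: card_Diff_subset finite_subset)
  have cFF0: "card (F0 - F) = k" using cF FF0 fF by (simp add: card_Diff_subset)
  have Ew: "w \<le> card (eff0 E)" and ET: "E \<in> T" using E unfolding B_def by auto
  have fe: "finite (eff0 E)" unfolding eff0_def U0_def by simp
  have "eff0 E \<subseteq> V \<union> (K - K0)" unfolding V_def U_def eff0_def U0_def by auto
  then have "card (eff0 E) \<le> card V + k"
    using card_mono[of "V \<union> (K - K0)" "eff0 E"] card_Un_le[of V "K - K0"] cKK0 fK fe
    unfolding V_def by (metis (no_types, lifting) finite_Diff finite_Int finite_UnI le_trans)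
  then have cV: "real w - k \<le> real (card V)" using Ew by linarith
  have fV: "finite V" unfolding V_def using fe by simp
  have each: "real n / 4 - k \<le> real (card {h \<in> F. kill j h E})" if j: "j \<in> V" for j
  proof -
    obtain b x where l: "((j,b),x) \<in> E" and nb: "\<not>(\<forall>h\<in>F0. enc h b = x)"
      using j unfolding V_def eff0_def by blast
    have br: "b < r" using T_lits ET l unfolding php_lits_def php_vars_def by auto
    have ex: "\<exists>h\<in>F0. enc h b = (\<not> x)" using nb by auto
    have bl: "n \<le> 4 * card {h\<in>F0. enc h b = (\<not> x)}" using bal br ex by blast
    have "{h\<in>F0. enc h b = (\<not> x)} \<subseteq> {h \<in> F. kill j h E} \<union> (F0 - F)"
      unfolding kill_def using l by auto
    then have "card {h\<in>F0. enc h b = (\<not> x)} \<le> card {h \<in> F. kill j h E} + k"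
      using card_mono[of "{h \<in> F. kill j h E} \<union> (F0 - F)"] card_Un_le[of "{h \<in> F. kill j h E}" "F0 - F"]
        cFF0 fF finF0 by (metis (no_types, lifting) finite_Diff finite_Un finite_subset le_trans mem_Collect_eq subsetI)
    then show ?thesis using bl by linarith
  qed
  have sig: "Sigma V (\<lambda>j. {h \<in> F. kill j h E}) \<subseteq> {p \<in> U \<times> F. kill (fst p) (snd p) E}"
    unfolding V_def by auto
  have fA: "finite (U \<times> F)" unfolding U_def using fF by simp
  have "real (card (Sigma V (\<lambda>j. {h \<in> F. kill j h E}))) = (\<Sum>j\<in>V. real (card {h \<in> F. kill j h E}))"
    using fV fF by simp
  also have "\<dots> \<ge> real (card V) * (real n / 4 - k)"
    using sum_bounded_below[of V "real n / 4 - k" "\<lambda>j. real (card {h \<in> F. kill j h E})"] each by simp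
  finally have s1: "real (card V) * (real n / 4 - k) \<le> real (card {p \<in> U \<times> F. kill (fst p) (snd p) E})"
    using card_mono[OF _ sig] fA
    by (smt (verit, ccfv_SIG) finite_subset mem_Collect_eq mem_Sigma_iff of_nat_le_iff subsetI)
  have nn: "0 \<le> real n / 4 - k" using nonneg ks by simp
  have "(real w - k) * (real n / 4 - k) \<le> real (card V) * (real n / 4 - k)"
    using mult_right_mono[OF cV nn] .
  then show ?thesis using s1 unfolding U_def by linarith
qed

lemma step:
  assumes st: "st K \<rho> F" and K0K: "K0 \<subseteq> K" and FF0: "F \<subseteq> F0" and cF: "card F + k = card F0"
    and ks: "k < s"
  shows "\<exists>j h. j \<in> {..<Suc n} - K \<and> h \<in> F \<and>
           p0 * real (card (B K \<rho>)) \<le> real (card {E \<in> B K \<rho>. kill j h E})"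
proof (rule ccontr)
  assume na: "\<not> ?thesis"
  define U where "U = {..<Suc n} - K"
  define A where "A = U \<times> F"
  define R where "R p E = kill (fst p) (snd p) E" for p :: "nat \<times> nat" and E
  have stK: "K \<subseteq> {..<Suc n}" "F \<subseteq> {..<n}" "inj_on \<rho> K" "\<rho> ` K = {..<n} - F"
    using st unfolding st_def by auto
  have fK: "finite K" using stK(1) finite_subset by blast
  have fF: "finite F" using stK(2) finite_subset by blast
  have c1: "card K + card F = n" using st_card[OF stK] .
  have cU: "card U = card F + 1" unfolding U_def using c1 stK(1) fK by (simp add: card_Diff_subset)
  have fA: "finite A" unfolding A_def U_def using fF by simp
  have cA: "real (card A) = (real (card F0) - k + 1) * (real (card F0) - k)"
  proof -
    have "card A = (card F + 1) * card F" unfolding A_def using cU by (simp add: card_cartesian_product)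
    then have e: "real (card A) = (real (card F) + 1) * real (card F)" by (metis of_nat_add of_nat_mult of_nat_1)
    have "real (card F) = real (card F0) - k" using cF by (metis add_diff_cancel_right' of_nat_add)
    then show ?thesis using e by simp
  qed
  have Fne: "F \<noteq> {}" using cF ks sF by auto
  have Une: "U \<noteq> {}" using cU by auto
  have Ane: "A \<noteq> {}" unfolding A_def using Fne Une by simp
  have lt: "real (card {E \<in> B K \<rho>. R p E}) < p0 * real (card (B K \<rho>))" if "p \<in> A" for p
  proof -
    obtain j h where p: "p = (j,h)" by fastforce
    have "j \<in> {..<Suc n} - K" "h \<in> F" using that p unfolding A_def U_def by auto
    then show ?thesis using na p unfolding R_def by fastforce
  qed
  have "(\<Sum>p\<in>A. real (card {E \<in> B K \<rho>. R p E})) < (\<Sum>p\<in>A. p0 * real (card (B K \<rho>)))"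
    by (rule sum_strict_mono[OF fA Ane]) (rule lt)
  also have "\<dots> = real (card A) * p0 * real (card (B K \<rho>))" by simp
  finally have up: "(\<Sum>p\<in>A. real (card {E \<in> B K \<rho>. R p E})) < real (card A) * p0 * real (card (B K \<rho>))" .
  have swap: "(\<Sum>p\<in>A. real (card {E \<in> B K \<rho>. R p E})) = (\<Sum>E\<in>B K \<rho>. real (card {p \<in> A. R p E}))"
  proof -
    have "(\<Sum>p\<in>A. card {E \<in> B K \<rho>. R p E}) = (\<Sum>p\<in>A. \<Sum>E\<in>{E. E \<in> B K \<rho> \<and> R p E}. (1::nat))"
      by simp
    also have "\<dots> = (\<Sum>E\<in>B K \<rho>. \<Sum>p\<in>{p. p \<in> A \<and> R p E}. (1::nat))"
      by (rule sum.swap_restrict[OF fA fin_B])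
    also have "\<dots> = (\<Sum>E\<in>B K \<rho>. card {p \<in> A. R p E})" by simp
    finally show ?thesis by (metis (no_types, lifting) of_nat_sum sum.cong)
  qed
  have lo: "real (card (B K \<rho>)) * ((real w - k) * (real n / 4 - k)) \<le> (\<Sum>E\<in>B K \<rho>. real (card {p \<in> A. R p E}))"
    using sum_bounded_below[of "B K \<rho>" "(real w - k) * (real n / 4 - k)" "\<lambda>E. real (card {p \<in> A. R p E})"]
      fact1[OF st K0K FF0 cF ks] unfolding A_def U_def R_def by simp
  have "real (card A) * p0 * real (card (B K \<rho>)) \<le> real (card (B K \<rho>)) * ((real w - k) * (real n / 4 - k))"
  proof -
    have "p0 * real (card A) \<le> (real w - k) * (real n / 4 - k)" using num ks cA by simp
    then have "real (card (B K \<rho>)) * (p0 * real (card A)) \<le> real (card (B K \<rho>)) * ((real w - k) * (real n / 4 - k))"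
      by (simp add: mult_left_mono)
    then show ?thesis by (simp add: mult_ac)
  qed
  then show False using up swap lo by linarith
qed

lemma iterate:
  "k \<le> s \<Longrightarrow> \<exists>K \<rho> F. st K \<rho> F \<and> K0 \<subseteq> K \<and> F \<subseteq> F0 \<and> card F + k = card F0 \<and>
     real (card (B K \<rho>)) \<le> real (card T) * (1 - p0) ^ k"
proof (induction k)
  case 0
  have "B K0 \<rho>0 \<subseteq> T" unfolding B_def by auto
  then have "card (B K0 \<rho>0) \<le> card T" using T_fin card_mono by blast
  moreover have "st K0 \<rho>0 F0" unfolding st_def using K0_sub F0_sub \<rho>0_inj \<rho>0_img by auto
  ultimately show ?case by auto
next
  case (Suc k)
  then obtain K \<rho> F where I: "st K \<rho> F" "K0 \<subseteq> K" "F \<subseteq> F0" "card F + k = card F0"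
    "real (card (B K \<rho>)) \<le> real (card T) * (1 - p0) ^ k" by auto
  have ks: "k < s" using Suc.prems by simp
  obtain j h where jh: "j \<in> {..<Suc n} - K" "h \<in> F"
    and big: "p0 * real (card (B K \<rho>)) \<le> real (card {E \<in> B K \<rho>. kill j h E})"
    using step[OF I(1-4) ks] by blast
  have stK: "K \<subseteq> {..<Suc n}" "F \<subseteq> {..<n}" "inj_on \<rho> K" "\<rho> ` K = {..<n} - F"
    using I(1) unfolding st_def by auto
  define K' where "K' = insert j K"
  define \<rho>' where "\<rho>' = \<rho>(j := h)"
  define F' where "F' = F - {h}"
  have jK: "j \<notin> K" using jh by simp
  have hK: "h \<notin> \<rho> ` K" using jh stK(4) by blast
  have st': "st K' \<rho>' F'"
    unfolding st_def
  proof (intro conjI)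
    show "K' \<subseteq> {..<Suc n}" unfolding K'_def using jh stK(1) by auto
    show "F' \<subseteq> {..<n}" unfolding F'_def using stK(2) by auto
    have e1: "inj_on \<rho>' K" using stK(3) jK unfolding \<rho>'_def inj_on_def by auto
    have "\<rho>' ` (K - {j}) = \<rho> ` K" using jK unfolding \<rho>'_def by auto
    then have e2: "\<rho>' j \<notin> \<rho>' ` (K - {j})" using hK unfolding \<rho>'_def by simp
    show "inj_on \<rho>' K'" unfolding K'_def using e1 e2 inj_on_insert by blast
    have imK: "\<rho>' ` K = \<rho> ` K" using jK unfolding \<rho>'_def by (intro image_cong) auto
    have "\<rho>' ` K' = insert h (\<rho> ` K)" unfolding K'_def image_insert imK by (simp add: \<rho>'_def)
    also have "\<dots> = {..<n} - F'" unfolding F'_def using stK(4) jh(2) stK(2) by auto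
    finally show "\<rho>' ` K' = {..<n} - F'" .
  qed
  have fF: "finite F" using stK(2) finite_subset by blast
  have cF': "card F' + Suc k = card F0" unfolding F'_def using I(4) jh(2) fF
    by (metis add_Suc_right card_Diff1_less card_Suc_Diff1 plus_nat.simps(2))
  have sub: "B K' \<rho>' \<subseteq> B K \<rho> - {E \<in> B K \<rho>. kill j h E}"
  proof
    fix E assume E: "E \<in> B K' \<rho>'"
    then have nk: "\<not> killed K' \<rho>' E" unfolding B_def by auto
    have "\<not> killed K \<rho> E"
    proof
      assume "killed K \<rho> E"
      then obtain l where "l \<in> E" "fst (fst l) \<in> K" "enc (\<rho> (fst (fst l))) (snd (fst l)) \<noteq> snd l"
        unfolding killed_def by blast
      moreover have "\<rho>' (fst (fst l)) = \<rho> (fst (fst l))" using \<open>fst (fst l) \<in> K\<close> jK unfolding \<rho>'_def by auto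
      ultimately have "killed K' \<rho>' E" unfolding killed_def K'_def by auto
      then show False using nk by simp
    qed
    moreover have "\<not> kill j h E"
    proof
      assume "kill j h E"
      then obtain b x where "((j,b),x) \<in> E" "enc h b \<noteq> x" unfolding kill_def by blast
      then have "killed K' \<rho>' E" unfolding killed_def K'_def \<rho>'_def by force
      then show False using nk by simp
    qed
    ultimately show "E \<in> B K \<rho> - {E \<in> B K \<rho>. kill j h E}" using E unfolding B_def by auto
  qed
  have "card (B K' \<rho>') \<le> card (B K \<rho> - {E \<in> B K \<rho>. kill j h E})"
    using card_mono[OF _ sub] fin_B by blast
  also have "\<dots> = card (B K \<rho>) - card {E \<in> B K \<rho>. kill j h E}"
    using fin_B by (simp add: card_Diff_subset)
  finally have cc: "card (B K' \<rho>') \<le> card (B K \<rho>) - card {E \<in> B K \<rho>. kill j h E}" .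
  have le: "card {E \<in> B K \<rho>. kill j h E} \<le> card (B K \<rho>)" using fin_B by (rule card_mono) blast
  have r1: "real (card (B K' \<rho>')) \<le> real (card (B K \<rho>) - card {E \<in> B K \<rho>. kill j h E})"
    using cc by (simp only: of_nat_le_iff)
  have r2: "real (card (B K \<rho>) - card {E \<in> B K \<rho>. kill j h E}) = real (card (B K \<rho>)) - real (card {E \<in> B K \<rho>. kill j h E})"
    using le by (rule of_nat_diff)
  have "real (card (B K' \<rho>')) \<le> real (card (B K \<rho>)) - real (card {E \<in> B K \<rho>. kill j h E})"
    using r1 r2 by linarith
  also have "\<dots> \<le> (1 - p0) * real (card (B K \<rho>))" using big by (simp add: algebra_simps)
  also have "\<dots> \<le> (1 - p0) * (real (card T) * (1 - p0) ^ k)"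
    using I(5) p0 by (simp add: mult_left_mono)
  also have "\<dots> = real (card T) * (1 - p0) ^ Suc k" by simp
  finally have "real (card (B K' \<rho>')) \<le> real (card T) * (1 - p0) ^ Suc k" .
  moreover have "K0 \<subseteq> K'" unfolding K'_def using I(2) by auto
  moreover have "F' \<subseteq> F0" unfolding F'_def using I(3) by auto
  ultimately show ?case using st' cF' by blast
qed

definition effF where
  "effF K F E = {i \<in> {..<Suc n} - K. \<exists>j b. ((i,j),b) \<in> E \<and> \<not>(\<forall>h\<in>F. enc h j = b)}"

lemma final:
  assumes small: "real (card T) * (1 - p0) ^ s < 1" and ws: "w + s + 1 \<le> card F0"
  shows "\<exists>K \<rho> F. st K \<rho> F \<and> (\<forall>E\<in>T. killed K \<rho> E \<or> card (effF K F E) + 2 \<le> card F)"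
proof -
  obtain K \<rho> F where I: "st K \<rho> F" "K0 \<subseteq> K" "F \<subseteq> F0" "card F + s = card F0"
    "real (card (B K \<rho>)) \<le> real (card T) * (1 - p0) ^ s"
    using iterate[of s] by auto
  have "card (B K \<rho>) = 0" using I(5) small by linarith
  then have Be: "B K \<rho> = {}" using fin_B by simp
  have "killed K \<rho> E \<or> card (effF K F E) + 2 \<le> card F" if E: "E \<in> T" for E
  proof (cases "killed K \<rho> E")
    case False
    then have "card (eff0 E) < w" using Be E unfolding B_def by (metis (mono_tags, lifting) empty_iff mem_Collect_eq not_le)
    moreover have "effF K F E \<subseteq> eff0 E" unfolding effF_def eff0_def U0_def using I(2,3) by blast
    moreover have "finite (eff0 E)" unfolding eff0_def U0_def by simp
    ultimately have "card (effF K F E) < w" using card_mono le_less_trans by blast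
    then show ?thesis using I(4) ws by linarith
  qed simp
  then show ?thesis using I(1) by blast
qed

lemma final':
  assumes small: "real (card T) * (1 - p0) ^ s < 1" and ws: "w + s + 1 \<le> card F0"
  shows "\<exists>K \<rho> F. K \<subseteq> {..<Suc n} \<and> F \<subseteq> {..<n} \<and> inj_on \<rho> K \<and> \<rho> ` K = {..<n} - F \<and>
     (\<forall>E\<in>T. (\<exists>l\<in>E. fst (fst l) \<in> K \<and> enc (\<rho> (fst (fst l))) (snd (fst l)) \<noteq> snd l) \<or>
       card {i \<in> {..<Suc n} - K. \<exists>j b. ((i,j),b) \<in> E \<and> \<not>(\<forall>h\<in>F. enc h j = b)} + 2 \<le> card F)"
  using final[OF small ws] unfolding st_def killed_def effF_def by simp

end

lemma num_fac1:
  fixes s f k :: real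
  assumes "1 \<le> s" "0 \<le> k" "k \<le> s - 1" "6 * s \<le> f"
  shows "4 * s * (f - k + 1) \<le> (f - s - 1 - k) * (5 * s + 2)"
proof -
  define x where "x = f - k"
  have x: "5 * s + 1 \<le> x" using assms unfolding x_def by linarith
  have "(5 * s + 1) * (s + 2) \<le> x * (s + 2)" using x assms(1) by (intro mult_right_mono) auto
  then have "4 * s * (x + 1) \<le> (x - s - 1) * (5 * s + 2)" by (simp add: algebra_simps)
  then show ?thesis unfolding x_def by (simp add: algebra_simps)
qed

lemma num_fac2:
  fixes s f k n :: real
  assumes "1 \<le> s" "0 \<le> k" "k \<le> s - 1" "f \<le> n" "8 * s \<le> n"
  shows "(s + 1) * (f - k) \<le> (n / 4 - k) * (7 * s + 1)"
proof -
  have a: "(s + 1) * (f - k) \<le> (s + 1) * (n - k)" using assms by (intro mult_left_mono) auto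
  have b: "8 * s * (3 * s - 3) \<le> n * (3 * s - 3)" using assms by (intro mult_right_mono) auto
  have c: "6 * s * k \<le> 6 * s * (s - 1)" using assms by (intro mult_left_mono) auto
  have "(n / 4 - k) * (7 * s + 1) - (s + 1) * (n - k) = n * (3 * s - 3) / 4 - 6 * s * k"
    by (simp add: algebra_simps)
  moreover have "n * (3 * s - 3) / 4 - 6 * s * k \<ge> 0" using b c by (simp add: algebra_simps)
  ultimately show ?thesis using a by linarith
qed

lemma num_main:
  fixes s f k n :: real
  assumes "1 \<le> s" "0 \<le> k" "k \<le> s - 1" "6 * s \<le> f" "f \<le> n" "8 * s \<le> n"
  shows "4 * s * (s + 1) / ((5 * s + 2) * (7 * s + 1)) * ((f - k + 1) * (f - k))
         \<le> (f - s - 1 - k) * (n / 4 - k)"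
proof -
  have f1: "4 * s * (f - k + 1) \<le> (f - s - 1 - k) * (5 * s + 2)" using num_fac1 assms by blast
  have f2: "(s + 1) * (f - k) \<le> (n / 4 - k) * (7 * s + 1)" using num_fac2 assms by blast
  have p1: "0 \<le> 4 * s * (f - k + 1)" using assms by simp
  have p2: "0 \<le> (s + 1) * (f - k)" using assms by simp
  have "(4 * s * (f - k + 1)) * ((s + 1) * (f - k)) \<le> ((f - s - 1 - k) * (5 * s + 2)) * ((n / 4 - k) * (7 * s + 1))"
    by (rule mult_mono[OF f1 f2]) (use f1 p1 p2 in linarith)+
  then have "4 * s * (s + 1) * ((f - k + 1) * (f - k)) \<le> ((f - s - 1 - k) * (n / 4 - k)) * ((5 * s + 2) * (7 * s + 1))"
    by (simp only: mult_ac)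
  moreover have D: "(5 * s + 2) * (7 * s + 1) > 0" using assms by simp
  ultimately have "4 * s * (s + 1) * ((f - k + 1) * (f - k)) / ((5 * s + 2) * (7 * s + 1)) \<le> (f - s - 1 - k) * (n / 4 - k)"
    by (simp add: pos_divide_le_eq)
  moreover have "4 * s * (s + 1) / ((5 * s + 2) * (7 * s + 1)) * ((f - k + 1) * (f - k))
      = 4 * s * (s + 1) * ((f - k + 1) * (f - k)) / ((5 * s + 2) * (7 * s + 1))" by simp
  ultimately show ?thesis by simp
qed

lemma num_poly:
  fixes s :: real
  assumes s4: "4 \<le> s"
  shows "(8 * s + 7) * ((5 * s + 2) * (7 * s + 1)) \<le> 320 * (s * s * (s + 1))"
proof -
  have a: "83 \<le> 40 * s - 77" using s4 by linarith
  have b: "4 * 83 \<le> s * (40 * s - 77)" by (rule mult_mono[OF s4 a]) (use s4 in linarith)+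
  have c: "183 \<le> s * (40 * s - 77) - 149" using b by linarith
  have d: "4 * 183 \<le> s * (s * (40 * s - 77) - 149)" by (rule mult_mono[OF s4 c]) (use s4 in linarith)+
  have "320 * (s * s * (s + 1)) - (8 * s + 7) * ((5 * s + 2) * (7 * s + 1)) = s * (s * (40 * s - 77) - 149) - 14"
    by (simp add: algebra_simps)
  then show ?thesis using d by linarith
qed

lemma num_final:
  fixes s n :: nat and t :: real
  assumes s4: "4 \<le> s" and ns: "n \<le> 8 * s + 7" and t0: "0 \<le> t"
    and tl: "t < (6/5) powr (real n / 16)"
  shows "t * (1 - 4 * real s * (real s + 1) / ((5 * real s + 2) * (7 * real s + 1))) ^ s < 1"
proof -
  define p where "p = 4 * real s * (real s + 1) / ((5 * real s + 2) * (7 * real s + 1))"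
  have den: "(5 * real s + 2) * (7 * real s + 1) > 0" by simp
  have p0: "0 \<le> p" unfolding p_def by simp
  have "(5 * real s + 2) * (7 * real s + 1) - 4 * real s * (real s + 1) = 31 * real s * real s + 15 * real s + 2"
    by (simp add: algebra_simps)
  moreover have "0 \<le> 31 * real s * real s" by simp
  ultimately have "4 * real s * (real s + 1) < (5 * real s + 2) * (7 * real s + 1)" by linarith
  then have p1: "p < 1" unfolding p_def using den by simp
  have ps: "real n / 80 \<le> p * real s"
  proof -
    have "real n \<le> 8 * real s + 7" using ns by simp
    moreover have "(8 * real s + 7) * ((5 * real s + 2) * (7 * real s + 1)) \<le> 320 * (real s * real s * (real s + 1))"
      using num_poly[of "real s"] s4 by simp
    ultimately have "real n * ((5 * real s + 2) * (7 * real s + 1)) \<le> 320 * (real s * real s * (real s + 1))"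
      by (smt (verit) den mult_right_mono)
    then show ?thesis unfolding p_def using den by (simp add: field_simps)
  qed
  have e1: "(1 - p) ^ s \<le> exp (- (p * real s))"
  proof -
    have "1 - p \<le> exp (- p)" using exp_ge_add_one_self[of "- p"] by simp
    then have "(1 - p) ^ s \<le> exp (- p) ^ s" using p1 by (intro power_mono) auto
    also have "\<dots> = exp (- (p * real s))" by (simp add: exp_of_nat_mult[symmetric] mult.commute)
    finally show ?thesis .
  qed
  have e2: "exp (- (p * real s)) \<le> exp (- (real n / 80))" using ps by simp
  have e3: "(6/5) powr (real n / 16) \<le> exp (real n / 80)"
  proof -
    have "ln (6/5 :: real) \<le> 6/5 - 1" by (rule ln_le_minus_one) simp
    then have "real n / 16 * ln (6/5 :: real) \<le> real n / 16 * (1/5)" by (intro mult_left_mono) auto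
    then have "real n / 16 * ln (6/5 :: real) \<le> real n / 80" by simp
    then show ?thesis unfolding powr_def by simp
  qed
  have pos: "(1 - p) ^ s > 0" using p1 by simp
  have "t * (1 - p) ^ s < (6/5) powr (real n / 16) * (1 - p) ^ s" using tl pos by simp
  also have "\<dots> \<le> exp (real n / 80) * exp (- (real n / 80))"
    by (rule mult_mono[OF e3 order_trans[OF e1 e2]]) (use pos in auto)
  also have "\<dots> = 1" by (simp add: exp_minus_inverse)
  finally show ?thesis unfolding p_def .
qed

lemma clause_lits:
  assumes "C \<in> bphp_clauses m n r enc" shows "C \<subseteq> php_lits m r"
  using assms unfolding bphp_clauses_def php_lits_def php_vars_def by auto

lemma terms_lits:
  assumes "sa_valid m n r enc c" "E \<in> sa_terms c" shows "E \<subseteq> php_lits m r"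
proof (cases c)
  case (SA_Clause C D)
  have "C \<in> bphp_clauses m n r enc" using assms(1) SA_Clause by simp
  then have hC: "C \<subseteq> php_lits m r" by (rule clause_lits)
  have hD: "D \<subseteq> php_lits m r" using assms(1) SA_Clause by simp
  show ?thesis using assms(2) SA_Clause hC hD by auto
next
  case (SA_Neg v D)
  have v: "v \<in> php_vars m r" "D \<subseteq> php_lits m r" using assms(1) SA_Neg by auto
  have "(v,b) \<in> php_lits m r" for b unfolding php_lits_def using v(1) by simp
  then show ?thesis using assms(2) SA_Neg v(2) by auto
next
  case (SA_Bound l D)
  then show ?thesis using assms by auto
qed

lemma fin_php_lits: "finite (php_lits m r)"
proof -
  have "php_vars m r \<subseteq> {..<m} \<times> {..<r}" unfolding php_vars_def by auto
  then have "finite (php_vars m r)" using finite_subset by blast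
  then show ?thesis unfolding php_lits_def by simp
qed

lemma terms_ne: "sa_terms c \<noteq> {}" by (cases c) auto

lemma r_facts:
  assumes n32: "32 \<le> n" and r: "r = nat \<lceil>log 2 (real n)\<rceil>"
  shows "2 \<le> r" "2 ^ (r - 1) < n"
proof -
  have "log 2 (real n) \<ge> log 2 32" using n32 by simp
  moreover have "log 2 (32::real) = 5"
  proof -
    have "log 2 (32::real) = log 2 (2 ^ 5)" by simp
    also have "\<dots> = real 5 * log 2 2" by (rule log_nat_power) simp
    finally show ?thesis by simp
  qed
  ultimately have lg: "log 2 (real n) \<ge> 5" by simp
  then have c5: "\<lceil>log 2 (real n)\<rceil> \<ge> 5" by (simp add: le_ceiling_iff)
  then have "int 2 \<le> \<lceil>log 2 (real n)\<rceil>" by simp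
  then show r2: "2 \<le> r" unfolding r by (subst le_nat_iff) (use c5 in auto)
  have "real_of_int \<lceil>log 2 (real n)\<rceil> - 1 < log 2 (real n)" using ceiling_correct[of "log 2 (real n)"] by linarith
  moreover have "real (r - 1) = real_of_int \<lceil>log 2 (real n)\<rceil> - 1" using r r2 by simp
  ultimately have "real (r - 1) < log 2 (real n)" by simp
  then have "2 powr real (r - 1) < 2 powr log 2 (real n)" by simp
  also have "\<dots> = real n" using n32 by simp
  finally have "real (2 ^ (r - 1)) < real n" by (simp add: powr_realpow)
  then show "2 ^ (r - 1) < n" by simp
qed

theorem theorem4:
  fixes n r :: nat and enc :: "nat \<Rightarrow> nat \<Rightarrow> bool" and S :: "sa_constraint set"
  assumes "n \<ge> 1"
    and "r = nat \<lceil>log 2 (real n)\<rceil>"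
    and "\<forall>a<n. \<forall>b<n. a \<noteq> b \<longrightarrow> (\<exists>j<r. enc a j \<noteq> enc b j)"
    and "sa_refutation (n + 1) n r enc S"
  shows "real (sa_num_terms S) \<ge> (6 / 5) powr (real n / 16) - 1"
proof -
  note rdef = assms(2) and enc_inj = assms(3)
  have valid: "\<forall>c\<in>S. sa_valid (Suc n) n r enc c"
    and nosol: "\<not> (\<exists>Z :: lit set \<Rightarrow> real. Z {} = 1 \<and> (\<forall>c\<in>S. sa_holds Z c))"
    using assms(4) unfolding sa_refutation_def by auto
  define T where "T = (\<Union>c\<in>S. sa_terms c)"
  have numT: "sa_num_terms S = card T" unfolding sa_num_terms_def T_def by simp
  have T_lits: "\<forall>E\<in>T. E \<subseteq> php_lits (Suc n) r"
    using valid terms_lits unfolding T_def by blast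
  have T_fin: "finite T"
  proof -
    have "T \<subseteq> Pow (php_lits (Suc n) r)" using T_lits by auto
    then show ?thesis using fin_php_lits finite_subset by blast
  qed
  have Sne: "S \<noteq> {}"
  proof
    assume "S = {}"
    then have "\<exists>Z :: lit set \<Rightarrow> real. Z {} = 1 \<and> (\<forall>c\<in>S. sa_holds Z c)" by (intro exI[of _ "\<lambda>_. 1"]) simp
    then show False using nosol by blast
  qed
  have Tne: "T \<noteq> {}" using Sne terms_ne unfolding T_def by blast
  have cT1: "1 \<le> card T" using Tne T_fin by (simp add: Suc_le_eq card_gt_0_iff)
  show ?thesis
  proof (cases "n < 32")
    case True
    have "(6/5::real) powr (real n / 16) \<le> (6/5) powr (2::real)"
      using True by (intro powr_mono) auto
    also have "(6/5::real) powr (2::real) = 36/25" by (simp add: powr_numeral power2_eq_square)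
    finally show ?thesis unfolding numT using cT1 by simp
  next
    case False
    then have n32: "32 \<le> n" by simp
    show ?thesis
    proof (rule ccontr)
      assume "\<not> ?thesis"
      then have tl: "real (card T) < (6/5) powr (real n / 16)" unfolding numT by simp
      have r2: "2 \<le> r" and rn: "2 ^ (r - 1) < n" using r_facts[OF n32 rdef] by auto
      obtain F0 where F0: "F0 \<subseteq> {..<n}" "3 * n \<le> 4 * card F0"
        and bal: "\<forall>b<r. \<forall>x. (\<exists>h\<in>F0. enc h b = x) \<longrightarrow> n \<le> 4 * card {h\<in>F0. enc h b = x}"
        using balance[OF enc_inj rn r2] by blast
      have fF0: "finite F0" using F0(1) finite_subset by blast
      have cF0n: "card F0 \<le> n" using F0(1) by (metis card_lessThan card_mono finite_lessThan)
      define M where "M = {..<n} - F0"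
      have cM: "card M = n - card F0" unfolding M_def using F0(1) fF0 by (simp add: card_Diff_subset)
      obtain \<rho>0 where \<rho>0: "bij_betw \<rho>0 {0..<card M} M"
        using ex_bij_betw_nat_finite[of M] unfolding M_def by blast
      define K0 where "K0 = {0..<card M}"
      define s where "s = n div 8"
      define f where "f = card F0"
      define w where "w = f - s - 1"
      define p0 where "p0 = 4 * real s * (real s + 1) / ((5 * real s + 2) * (7 * real s + 1))"
      have s4: "4 \<le> s" unfolding s_def using n32 by simp
      have s8: "8 * s \<le> n" "n \<le> 8 * s + 7" unfolding s_def by auto
      have f6: "6 * s \<le> f" unfolding f_def using F0(2) s8 by linarith
      have fn: "f \<le> n" unfolding f_def using cF0n .
      have wr: "real w = real f - real s - 1" unfolding w_def using f6 s4 by simp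
      have den: "(5 * real s + 2) * (7 * real s + 1) > 0" by simp
      have p0a: "0 \<le> p0" unfolding p0_def by simp
      have "(5 * real s + 2) * (7 * real s + 1) - 4 * real s * (real s + 1) = 31 * real s * real s + 15 * real s + 2"
        by (simp add: algebra_simps)
      moreover have "0 \<le> 31 * real s * real s" by simp
      ultimately have "4 * real s * (real s + 1) < (5 * real s + 2) * (7 * real s + 1)" by linarith
      then have p0b: "p0 \<le> 1" unfolding p0_def using den by simp
      have G: "greedy n r enc T F0 K0 \<rho>0 w s p0"
      proof (unfold_locales)
        show "finite T" by (rule T_fin)
        show "\<forall>E\<in>T. E \<subseteq> php_lits (Suc n) r" by (rule T_lits)
        show "K0 \<subseteq> {..<Suc n}" unfolding K0_def using cM by auto
        show "F0 \<subseteq> {..<n}" by (rule F0(1))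
        show "inj_on \<rho>0 K0" using \<rho>0 unfolding K0_def bij_betw_def by blast
        show "\<rho>0 ` K0 = {..<n} - F0" using \<rho>0 unfolding K0_def M_def bij_betw_def by blast
        show "\<forall>b<r. \<forall>x. (\<exists>h\<in>F0. enc h b = x) \<longrightarrow> n \<le> 4 * card {h \<in> F0. enc h b = x}" by (rule bal)
        show "s < card F0" using f6 s4 unfolding f_def by linarith
        show "\<forall>k<s. p0 * ((real (card F0) - real k + 1) * (real (card F0) - real k))
                  \<le> (real w - real k) * (real n / 4 - real k)"
        proof (intro allI impI)
          fix k assume k: "k < s"
          have "p0 * ((real f - real k + 1) * (real f - real k))
                \<le> (real f - real s - 1 - real k) * (real n / 4 - real k)"
            unfolding p0_def
            by (rule num_main) (use s4 k f6 fn s8 in auto)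
          then show "p0 * ((real (card F0) - real k + 1) * (real (card F0) - real k))
                  \<le> (real w - real k) * (real n / 4 - real k)" using wr unfolding f_def by simp
        qed
        show "\<forall>k<s. real k \<le> real w \<and> real k \<le> real n / 4"
        proof (intro allI impI)
          fix k assume k: "k < s"
          have a: "real k \<le> real s" using k by simp
          have b: "6 * real s \<le> real f" using f6 by (metis of_nat_le_iff of_nat_mult of_nat_numeral)
          have c: "8 * real s \<le> real n" using s8(1) by (metis of_nat_le_iff of_nat_mult of_nat_numeral)
          have d: "4 \<le> real s" using s4 by simp
          show "real k \<le> real w \<and> real k \<le> real n / 4" using a b c d wr by linarith
        qed
        show "0 \<le> p0" by (rule p0a)
        show "p0 \<le> 1" by (rule p0b)
      qed
      have small: "real (card T) * (1 - p0) ^ s < 1"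
        unfolding p0_def by (rule num_final[OF s4 s8(2) _ tl]) simp
      have "w + s + 1 = f" unfolding w_def using f6 s4 by arith
      then have ws: "w + s + 1 \<le> card F0" unfolding f_def by simp
      obtain K \<rho> F where KFall: "K \<subseteq> {..<Suc n} \<and> F \<subseteq> {..<n} \<and> inj_on \<rho> K \<and> \<rho> ` K = {..<n} - F \<and>
        (\<forall>E\<in>T. (\<exists>l\<in>E. fst (fst l) \<in> K \<and> enc (\<rho> (fst (fst l))) (snd (fst l)) \<noteq> snd l) \<or>
           card {i \<in> {..<Suc n} - K. \<exists>j b. ((i,j),b) \<in> E \<and> \<not>(\<forall>h\<in>F. enc h j = b)} + 2 \<le> card F)"
        using greedy.final'[OF G small ws] by (elim exE) (rule that)
      then have KF: "K \<subseteq> {..<Suc n}" "F \<subseteq> {..<n}" "inj_on \<rho> K" "\<rho> ` K = {..<n} - F"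
        and cond: "\<forall>E\<in>T. (\<exists>l\<in>E. fst (fst l) \<in> K \<and> enc (\<rho> (fst (fst l))) (snd (fst l)) \<noteq> snd l) \<or>
           card {i \<in> {..<Suc n} - K. \<exists>j b. ((i,j),b) \<in> E \<and> \<not>(\<forall>h\<in>F. enc h j = b)} + 2 \<le> card F"
        by blast+
      have Sl: "sol n r enc K \<rho> F"
      proof (unfold_locales)
        show "\<forall>a<n. \<forall>b<n. a \<noteq> b \<longrightarrow> (\<exists>j<r. enc a j \<noteq> enc b j)" by (rule enc_inj)
        show "K \<subseteq> {..<Suc n}" by (rule KF(1))
        show "F \<subseteq> {..<n}" by (rule KF(2))
        show "inj_on \<rho> K" by (rule KF(3))
        show "\<rho> ` K = {..<n} - F" by (rule KF(4))
        show "1 \<le> r" using r2 by simp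
      qed
      have cond': "\<forall>c\<in>S. \<forall>E\<in>sa_terms c.
        (\<exists>l\<in>E. fst (fst l) \<in> K \<and> enc (\<rho> (fst (fst l))) (snd (fst l)) \<noteq> snd l) \<or>
        card {i \<in> {..<Suc n} - K. \<exists>j b. ((i,j),b) \<in> E \<and> \<not>(\<forall>h\<in>F. enc h j = b)} + 2 \<le> card F"
      proof (intro ballI)
        fix c E assume "c \<in> S" "E \<in> sa_terms c"
        then have "E \<in> T" unfolding T_def by blast
        with cond show "(\<exists>l\<in>E. fst (fst l) \<in> K \<and> enc (\<rho> (fst (fst l))) (snd (fst l)) \<noteq> snd l) \<or>
          card {i \<in> {..<Suc n} - K. \<exists>j b. ((i,j),b) \<in> E \<and> \<not>(\<forall>h\<in>F. enc h j = b)} + 2 \<le> card F"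
          by (rule bspec)
      qed
      have "\<exists>Z :: lit set \<Rightarrow> real. Z {} = 1 \<and> (\<forall>c\<in>S. sa_holds Z c)"
        by (rule sol.sol_exists'[OF Sl valid cond'])
      then show False using nosol by blast
    qed
  qed
qed

end
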